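(* Let $\alpha>0$, $a,c\in\mathbb C$, and $g(z)=\exp\left(\alpha az+\frac{\alpha}{2}cz^2\right)$ for $z\in\mathbb C$. If $1\le p<\infty$, then $g\in\mathcal{H}^1_{p,\alpha}$ if and only if $|c|<1$, and in this case \[ \|g\|_{p,\alpha}=\frac{1}{(1-|c|^2)^{1/(2p)}}\exp\left(\frac{\alpha}{2}\,\frac{|a|^2+\Re(\overline c a^2)}{1-|c|^2}\right). \]
   Context: For $\alpha>0$, $\gamma^1_\alpha(dz)=(\alpha/\pi)e^{-\alpha|z|^2}\lambda(dz)$ on $\mathbb C$, with $\lambda$ Lebesgue measure. $\mathcal{H}^1_{p,\alpha}$ is the space of entire functions $f$ with $\|f\|_{p,\alpha}:=\left(\int_{\mathbb C}|f|^p\,d\gamma^1_{\alpha p/2}\right)^{1/p}<\infty$. *)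

theory Defs
  imports "HOL-Analysis.Analysis"
begin

definition gauss_density :: "real \<Rightarrow> complex \<Rightarrow> real" where
  "gauss_density \<alpha> z = (\<alpha> / pi) * exp (- \<alpha> * (cmod z)\<^sup>2)"

definition gauss_measure :: "real \<Rightarrow> complex measure" where
  "gauss_measure \<alpha> = density lborel (\<lambda>z. ennreal (gauss_density \<alpha> z))"

definition fock_space :: "real \<Rightarrow> real \<Rightarrow> (complex \<Rightarrow> complex) set" where
  "fock_space p \<alpha> = {f. f holomorphic_on UNIV \<and>
      (\<integral>\<^sup>+ z. ennreal (cmod (f z) powr p) \<partial>gauss_measure (\<alpha> * p / 2)) < \<infinity>}"

definition fock_norm :: "real \<Rightarrow> real \<Rightarrow> (complex \<Rightarrow> complex) \<Rightarrow> real" where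
  "fock_norm p \<alpha> f = (\<integral> z. cmod (f z) powr p \<partial>gauss_measure (\<alpha> * p / 2)) powr (1 / p)"

end

theory Submission
  imports Defs "HOL-Probability.Probability"
begin


lemma complex_lborel:
  "(lborel :: complex measure) = distr (lborel \<Otimes>\<^sub>M lborel) borel (\<lambda>p. Complex (fst p) (snd p))"
proof (rule lborel_eqI)
  have m[measurable]: "(\<lambda>p::real\<times>real. Complex (fst p) (snd p)) \<in> borel_measurable (lborel \<Otimes>\<^sub>M lborel)"
  proof -
    have "(\<lambda>p::real\<times>real. Complex (fst p) (snd p)) = (\<lambda>p. complex_of_real (fst p) + \<i> * complex_of_real (snd p))"
      by (auto simp: complex_eq_iff)
    moreover have "(\<lambda>p::real\<times>real. complex_of_real (fst p) + \<i> * complex_of_real (snd p)) \<in> borel_measurable (lborel \<Otimes>\<^sub>M lborel)"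
      by measurable
    ultimately show ?thesis by simp
  qed
  fix l u :: complex
  assume le: "\<And>b. b \<in> Basis \<Longrightarrow> l \<bullet> b \<le> u \<bullet> b"
  have le1: "Re l \<le> Re u" and le2: "Im l \<le> Im u" using le[of 1] le[of \<i>] by auto
  have pre: "(\<lambda>p. Complex (fst p) (snd p)) -` box l u \<inter> space (lborel \<Otimes>\<^sub>M lborel) = box (Re l) (Re u) \<times> box (Im l) (Im u)"
    by (auto simp: box_def Basis_complex_def space_pair_measure)
  have "emeasure (distr (lborel \<Otimes>\<^sub>M lborel) borel (\<lambda>p. Complex (fst p) (snd p))) (box l u)
      = emeasure (lborel \<Otimes>\<^sub>M lborel) (box (Re l) (Re u) \<times> box (Im l) (Im u))"
    by (subst emeasure_distr) (auto simp: pre)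
  also have "\<dots> = ennreal (Re u - Re l) * ennreal (Im u - Im l)"
    using le1 le2 by (simp add: lborel.emeasure_pair_measure_Times)
  also have "\<dots> = (\<Prod>b\<in>Basis. (u - l) \<bullet> b)"
    using le1 le2 by (simp add: Basis_complex_def ennreal_mult)
  finally show "emeasure (distr (lborel \<Otimes>\<^sub>M lborel) borel (\<lambda>p. Complex (fst p) (snd p))) (box l u) = (\<Prod>b\<in>Basis. (u - l) \<bullet> b)" .
qed simp

lemma nn_integral_complex:
  assumes [measurable]: "f \<in> borel_measurable (borel :: complex measure)"
  shows "(\<integral>\<^sup>+z. f z \<partial>lborel) = (\<integral>\<^sup>+x. \<integral>\<^sup>+y. f (Complex x y) \<partial>lborel \<partial>lborel)"
proof -
  have m[measurable]: "(\<lambda>p::real\<times>real. Complex (fst p) (snd p)) \<in> borel_measurable (lborel \<Otimes>\<^sub>M lborel)"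
  proof -
    have "(\<lambda>p::real\<times>real. Complex (fst p) (snd p)) = (\<lambda>p. complex_of_real (fst p) + \<i> * complex_of_real (snd p))"
      by (auto simp: complex_eq_iff)
    moreover have "(\<lambda>p::real\<times>real. complex_of_real (fst p) + \<i> * complex_of_real (snd p)) \<in> borel_measurable (lborel \<Otimes>\<^sub>M lborel)"
      by measurable
    ultimately show ?thesis by simp
  qed
  have "(\<integral>\<^sup>+z. f z \<partial>lborel) = (\<integral>\<^sup>+p. f (Complex (fst p) (snd p)) \<partial>(lborel \<Otimes>\<^sub>M lborel))"
    by (subst complex_lborel) (simp add: nn_integral_distr)
  also have "\<dots> = (\<integral>\<^sup>+x. \<integral>\<^sup>+y. f (Complex x y) \<partial>lborel \<partial>lborel)"
    using lborel.nn_integral_fst[of "\<lambda>p. f (Complex (fst p) (snd p))" lborel] by simp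
  finally show ?thesis .
qed



lemma gauss1:
  fixes A B :: real assumes A: "A > 0"
  shows "(\<integral>\<^sup>+x. ennreal (exp (- A * x\<^sup>2 + B * x)) \<partial>lborel) = ennreal (sqrt (pi / A) * exp (B\<^sup>2 / (4 * A)))"
proof -
  define \<mu> where "\<mu> = B / (2 * A)"
  define \<sigma> where "\<sigma> = 1 / sqrt (2 * A)"
  have s2: "\<sigma>\<^sup>2 = 1 / (2 * A)" using A by (simp add: \<sigma>_def power_divide)
  have nd: "normal_density \<mu> \<sigma> x = sqrt (A / pi) * exp (- A * (x - \<mu>)\<^sup>2)" for x
  proof -
    have "2 * pi * \<sigma>\<^sup>2 = pi / A" using A by (simp add: s2)
    moreover have "- (x - \<mu>)\<^sup>2 / (2 * \<sigma>\<^sup>2) = - A * (x - \<mu>)\<^sup>2" using A by (simp add: s2)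
    ultimately show ?thesis using A by (simp add: normal_density_def real_sqrt_divide)
  qed
  have eq: "exp (- A * x\<^sup>2 + B * x) = sqrt (pi / A) * exp (B\<^sup>2 / (4 * A)) * normal_density \<mu> \<sigma> x" for x
  proof -
    have "- A * x\<^sup>2 + B * x = B\<^sup>2 / (4 * A) + (- A * (x - \<mu>)\<^sup>2)"
      using A by (simp add: \<mu>_def field_simps power2_eq_square)
    hence "exp (- A * x\<^sup>2 + B * x) = exp (B\<^sup>2 / (4 * A) + (- A * (x - \<mu>)\<^sup>2))"
      by (simp only:)
    hence "exp (- A * x\<^sup>2 + B * x) = exp (B\<^sup>2 / (4 * A)) * exp (- A * (x - \<mu>)\<^sup>2)"
      by (simp only: exp_add)
    moreover have "sqrt (pi / A) * sqrt (A / pi) = 1"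
      using A by (simp add: real_sqrt_mult[symmetric])
    ultimately show ?thesis unfolding nd by (metis (no_types, lifting) mult.assoc mult.commute mult_1)
  qed
  have "(\<integral>\<^sup>+x. ennreal (exp (- A * x\<^sup>2 + B * x)) \<partial>lborel)
      = (\<integral>\<^sup>+x. ennreal (sqrt (pi / A) * exp (B\<^sup>2 / (4 * A))) * ennreal (normal_density \<mu> \<sigma> x) \<partial>lborel)"
    by (intro nn_integral_cong, subst eq, rule ennreal_mult) (use A in auto)
  also have "\<dots> = ennreal (sqrt (pi / A) * exp (B\<^sup>2 / (4 * A))) * (\<integral>\<^sup>+x. ennreal (normal_density \<mu> \<sigma> x) \<partial>lborel)"
    by (rule nn_integral_cmult) simp
  also have "(\<integral>\<^sup>+x. ennreal (normal_density \<mu> \<sigma> x) \<partial>lborel) = 1"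
    using A by (subst nn_integral_eq_integral) (auto simp: \<sigma>_def intro!: integrable_normal_density integral_normal_density)
  finally show ?thesis by simp
qed

lemma gauss1_inf:
  fixes A B :: real assumes A: "A \<le> 0"
  shows "(\<integral>\<^sup>+x. ennreal (exp (- A * x\<^sup>2 + B * x)) \<partial>lborel) = \<infinity>"
proof -
  let ?f = "\<lambda>x. ennreal (exp (- A * x\<^sup>2 + B * x))"
  have refl: "(\<integral>\<^sup>+x. ?f x \<partial>lborel) = (\<integral>\<^sup>+x. ?f (0 + (-1) * x) \<partial>lborel)"
    using nn_integral_real_affine[of ?f "-1" 0] by simp
  have "\<infinity> = (\<integral>\<^sup>+(x::real). (1::ennreal) \<partial>lborel)" by simp
  also have "\<dots> \<le> (\<integral>\<^sup>+x. ?f x + ?f (0 + (-1) * x) \<partial>lborel)"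
  proof (rule nn_integral_mono)
    fix x :: real
    have "1 \<le> exp (- A * x\<^sup>2 + B * x) + exp (- A * x\<^sup>2 + B * (-x))"
    proof -
      have h: "0 \<le> - A * x\<^sup>2" using A by (simp add: mult_nonpos_nonneg)
      show ?thesis
      proof (cases "B * x \<ge> 0")
        case True
        hence "1 \<le> exp (- A * x\<^sup>2 + B * x)" using h by simp
        thus ?thesis by (smt (verit) exp_gt_zero)
      next
        case False
        hence "1 \<le> exp (- A * x\<^sup>2 + B * (-x))" using h by simp
        thus ?thesis by (smt (verit) exp_gt_zero)
      qed
    qed
    thus "1 \<le> ?f x + ?f (0 + (-1) * x)"
      by (simp add: ennreal_plus[symmetric] del: ennreal_plus)
  qed
  also have "\<dots> = (\<integral>\<^sup>+x. ?f x \<partial>lborel) + (\<integral>\<^sup>+x. ?f (0 + (-1) * x) \<partial>lborel)"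
    by (rule nn_integral_add) auto
  also have "\<dots> = 2 * (\<integral>\<^sup>+x. ?f x \<partial>lborel)" using refl by (simp add: mult_2)
  finally have "2 * (\<integral>\<^sup>+x. ?f x \<partial>lborel) = \<infinity>" by (simp add: top_unique)
  thus ?thesis by (simp add: ennreal_mult_eq_top_iff)
qed



lemma gauss_inner:
  fixes A B C D E x :: real assumes C: "C > 0"
  shows "(\<integral>\<^sup>+y. ennreal (exp (-(A*x\<^sup>2 + 2*B*x*y + C*y\<^sup>2) + D*x + E*y)) \<partial>lborel)
     = ennreal (sqrt (pi/C) * exp (E\<^sup>2/(4*C)) * exp (- ((A*C - B\<^sup>2)/C) * x\<^sup>2 + (D - B*E/C) * x))"
proof -
  have eq: "exp (-(A*x\<^sup>2 + 2*B*x*y + C*y\<^sup>2) + D*x + E*y) = exp (-A*x\<^sup>2 + D*x) * exp (- C * y\<^sup>2 + (E - 2*B*x) * y)" for y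
  proof -
    have "-(A*x\<^sup>2 + 2*B*x*y + C*y\<^sup>2) + D*x + E*y = (-A*x\<^sup>2 + D*x) + (- C * y\<^sup>2 + (E - 2*B*x) * y)"
      by (simp add: algebra_simps)
    thus ?thesis by (simp only: exp_add)
  qed
  have "(\<integral>\<^sup>+y. ennreal (exp (-(A*x\<^sup>2 + 2*B*x*y + C*y\<^sup>2) + D*x + E*y)) \<partial>lborel)
      = (\<integral>\<^sup>+y. ennreal (exp (-A*x\<^sup>2 + D*x)) * ennreal (exp (- C * y\<^sup>2 + (E - 2*B*x) * y)) \<partial>lborel)"
    by (intro nn_integral_cong, subst eq, rule ennreal_mult) auto
  also have "\<dots> = ennreal (exp (-A*x\<^sup>2 + D*x)) * (\<integral>\<^sup>+y. ennreal (exp (- C * y\<^sup>2 + (E - 2*B*x) * y)) \<partial>lborel)"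
    by (rule nn_integral_cmult) simp
  also have "\<dots> = ennreal (exp (-A*x\<^sup>2 + D*x)) * ennreal (sqrt (pi / C) * exp ((E - 2*B*x)\<^sup>2 / (4 * C)))"
    using gauss1[OF C] by simp
  also have "\<dots> = ennreal (exp (-A*x\<^sup>2 + D*x) * (sqrt (pi / C) * exp ((E - 2*B*x)\<^sup>2 / (4 * C))))"
    by (rule ennreal_mult[symmetric]) (use C in auto)
  also have "exp (-A*x\<^sup>2 + D*x) * (sqrt (pi / C) * exp ((E - 2*B*x)\<^sup>2 / (4 * C)))
      = sqrt (pi/C) * exp (E\<^sup>2/(4*C)) * exp (- ((A*C - B\<^sup>2)/C) * x\<^sup>2 + (D - B*E/C) * x)"
  proof -
    have "-A*x\<^sup>2 + D*x + (E - 2*B*x)\<^sup>2 / (4 * C) = E\<^sup>2/(4*C) + (- ((A*C - B\<^sup>2)/C) * x\<^sup>2 + (D - B*E/C) * x)"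
      using C by (simp add: field_simps power2_eq_square)
    hence "exp (-A*x\<^sup>2 + D*x) * exp ((E - 2*B*x)\<^sup>2 / (4 * C)) = exp (E\<^sup>2/(4*C)) * exp (- ((A*C - B\<^sup>2)/C) * x\<^sup>2 + (D - B*E/C) * x)"
      by (simp only: exp_add[symmetric])
    thus ?thesis by (simp add: algebra_simps)
  qed
  finally show ?thesis .
qed

lemma gauss_inner_inf:
  fixes A B C D E x :: real assumes C: "C \<le> 0"
  shows "(\<integral>\<^sup>+y. ennreal (exp (-(A*x\<^sup>2 + 2*B*x*y + C*y\<^sup>2) + D*x + E*y)) \<partial>lborel) = \<infinity>"
proof -
  have eq: "exp (-(A*x\<^sup>2 + 2*B*x*y + C*y\<^sup>2) + D*x + E*y) = exp (-A*x\<^sup>2 + D*x) * exp (- C * y\<^sup>2 + (E - 2*B*x) * y)" for y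
  proof -
    have "-(A*x\<^sup>2 + 2*B*x*y + C*y\<^sup>2) + D*x + E*y = (-A*x\<^sup>2 + D*x) + (- C * y\<^sup>2 + (E - 2*B*x) * y)"
      by (simp add: algebra_simps)
    thus ?thesis by (simp only: exp_add)
  qed
  have "(\<integral>\<^sup>+y. ennreal (exp (-(A*x\<^sup>2 + 2*B*x*y + C*y\<^sup>2) + D*x + E*y)) \<partial>lborel)
      = (\<integral>\<^sup>+y. ennreal (exp (-A*x\<^sup>2 + D*x)) * ennreal (exp (- C * y\<^sup>2 + (E - 2*B*x) * y)) \<partial>lborel)"
    by (intro nn_integral_cong, subst eq, rule ennreal_mult) auto
  also have "\<dots> = ennreal (exp (-A*x\<^sup>2 + D*x)) * (\<integral>\<^sup>+y. ennreal (exp (- C * y\<^sup>2 + (E - 2*B*x) * y)) \<partial>lborel)"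
    by (rule nn_integral_cmult) simp
  also have "\<dots> = \<infinity>"
    using gauss1_inf[OF C] by (simp add: ennreal_mult_eq_top_iff)
  finally show ?thesis .
qed

definition gK :: "real \<Rightarrow> real \<Rightarrow> real \<Rightarrow> real \<Rightarrow> real \<Rightarrow> real" where
  "gK A B C D E = (A*E\<^sup>2 + C*D\<^sup>2 - 2*B*D*E)/(4*(A*C-B\<^sup>2))"

lemma gauss2:
  fixes A B C D E :: real
  shows "(\<integral>\<^sup>+x. \<integral>\<^sup>+y. ennreal (exp (-(A*x\<^sup>2 + 2*B*x*y + C*y\<^sup>2) + D*x + E*y)) \<partial>lborel \<partial>lborel)
     = (if C > 0 \<and> A*C - B\<^sup>2 > 0 then ennreal (pi / sqrt (A*C-B\<^sup>2) * exp (gK A B C D E)) else \<infinity>)"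
proof (cases "C > 0")
  case C: True
  let ?A' = "(A*C - B\<^sup>2)/C" and ?D' = "D - B*E/C"
  have "(\<integral>\<^sup>+x. \<integral>\<^sup>+y. ennreal (exp (-(A*x\<^sup>2 + 2*B*x*y + C*y\<^sup>2) + D*x + E*y)) \<partial>lborel \<partial>lborel)
     = (\<integral>\<^sup>+x. ennreal (sqrt (pi/C) * exp (E\<^sup>2/(4*C))) * ennreal (exp (- ?A' * x\<^sup>2 + ?D' * x)) \<partial>lborel)"
    by (intro nn_integral_cong, subst gauss_inner[OF C], rule ennreal_mult) (use C in auto)
  also have "\<dots> = ennreal (sqrt (pi/C) * exp (E\<^sup>2/(4*C))) * (\<integral>\<^sup>+x. ennreal (exp (- ?A' * x\<^sup>2 + ?D' * x)) \<partial>lborel)"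
    by (rule nn_integral_cmult) simp
  finally have I: "(\<integral>\<^sup>+x. \<integral>\<^sup>+y. ennreal (exp (-(A*x\<^sup>2 + 2*B*x*y + C*y\<^sup>2) + D*x + E*y)) \<partial>lborel \<partial>lborel)
     = ennreal (sqrt (pi/C) * exp (E\<^sup>2/(4*C))) * (\<integral>\<^sup>+x. ennreal (exp (- ?A' * x\<^sup>2 + ?D' * x)) \<partial>lborel)" .
  show ?thesis
  proof (cases "A*C - B\<^sup>2 > 0")
    case P: True
    have A': "?A' > 0" using C P by simp
    have "ennreal (sqrt (pi/C) * exp (E\<^sup>2/(4*C))) * ennreal (sqrt (pi / ?A') * exp (?D'\<^sup>2 / (4 * ?A')))
        = ennreal (sqrt (pi/C) * exp (E\<^sup>2/(4*C)) * (sqrt (pi / ?A') * exp (?D'\<^sup>2 / (4 * ?A'))))"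
    proof (rule ennreal_mult[symmetric])
      show "0 \<le> sqrt (pi/C) * exp (E\<^sup>2/(4*C))" using C by simp
      have "0 \<le> pi / ?A'" using A' by (intro divide_nonneg_pos) auto
      thus "0 \<le> sqrt (pi / ?A') * exp (?D'\<^sup>2 / (4 * ?A'))" by simp
    qed
    also have "sqrt (pi/C) * exp (E\<^sup>2/(4*C)) * (sqrt (pi / ?A') * exp (?D'\<^sup>2 / (4 * ?A')))
        = pi / sqrt (A*C-B\<^sup>2) * exp (gK A B C D E)"
    proof -
      have s: "sqrt (pi/C) * sqrt (pi / ?A') = pi / sqrt (A*C-B\<^sup>2)"
      proof -
        have "sqrt (pi/C) * sqrt (pi / ?A') = sqrt (pi/C * (pi / ?A'))" by (simp only: real_sqrt_mult)
        also have "pi/C * (pi / ?A') = pi\<^sup>2 / (A*C-B\<^sup>2)" using C P by (simp add: field_simps power2_eq_square)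
        also have "sqrt (pi\<^sup>2 / (A*C-B\<^sup>2)) = pi / sqrt (A*C-B\<^sup>2)" by (simp add: real_sqrt_divide)
        finally show ?thesis .
      qed
      have e: "E\<^sup>2/(4*C) + ?D'\<^sup>2 / (4 * ?A') = gK A B C D E"
        unfolding gK_def using C P by (simp add: field_simps power2_eq_square)
      have "sqrt (pi/C) * exp (E\<^sup>2/(4*C)) * (sqrt (pi / ?A') * exp (?D'\<^sup>2 / (4 * ?A')))
          = (sqrt (pi/C) * sqrt (pi / ?A')) * exp (E\<^sup>2/(4*C) + ?D'\<^sup>2 / (4 * ?A'))"
        by (simp only: exp_add mult_ac)
      also have "\<dots> = pi / sqrt (A*C-B\<^sup>2) * exp (gK A B C D E)" by (simp only: s e)
      finally show ?thesis .
    qed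
    finally show ?thesis using I gauss1[OF A'] C P by simp
  next
    case P: False
    have A': "?A' \<le> 0" using C P by (simp add: divide_nonpos_pos)
    have "ennreal (sqrt (pi/C) * exp (E\<^sup>2/(4*C))) \<noteq> 0" using C by simp
    thus ?thesis using I gauss1_inf[OF A'] C P by (simp add: ennreal_mult_eq_top_iff)
  qed
next
  case C: False
  hence "C \<le> 0" by simp
  hence C0: "C \<le> 0" .
  have "(\<integral>\<^sup>+x. \<integral>\<^sup>+y. ennreal (exp (-(A*x\<^sup>2 + 2*B*x*y + C*y\<^sup>2) + D*x + E*y)) \<partial>lborel \<partial>lborel)
     = (\<integral>\<^sup>+(x::real). \<infinity> \<partial>lborel)"
    by (rule nn_integral_cong) (rule gauss_inner_inf[OF C0])
  also have "\<dots> = \<infinity>" by (simp add: nn_integral_const ennreal_mult_top)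
  finally show ?thesis using C by simp
qed



theorem lemma5p1:
  fixes \<alpha> p :: real and a c :: complex and g :: "complex \<Rightarrow> complex"
  assumes "\<alpha> > 0" and "1 \<le> p"
    and "\<And>z. g z = exp (of_real \<alpha> * a * z + of_real (\<alpha> / 2) * c * z\<^sup>2)"
  shows "(g \<in> fock_space p \<alpha> \<longleftrightarrow> cmod c < 1) \<and>
    (cmod c < 1 \<longrightarrow>
      fock_norm p \<alpha> g =
        1 / (1 - (cmod c)\<^sup>2) powr (1 / (2 * p)) *
        exp ((\<alpha> / 2) * (((cmod a)\<^sup>2 + Re (cnj c * a\<^sup>2)) / (1 - (cmod c)\<^sup>2))))"
proof -
  note a\<alpha> = assms(1) and ap = assms(2)
  define \<beta> where "\<beta> = \<alpha> * p / 2"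
  have \<beta>: "\<beta> > 0" using a\<alpha> ap by (simp add: \<beta>_def)
  define a1 where "a1 = Re a"
  define a2 where "a2 = Im a"
  define c1 where "c1 = Re c"
  define c2 where "c2 = Im c"
  define Ac where "Ac = \<beta> * (1 - c1)"
  define Bc where "Bc = \<beta> * c2"
  define Cc where "Cc = \<beta> * (1 + c1)"
  define Dc where "Dc = 2 * \<beta> * a1"
  define Ec where "Ec = - 2 * \<beta> * a2"
  define w where "w = (\<lambda>z. of_real \<alpha> * a * z + of_real (\<alpha> / 2) * c * z\<^sup>2)"
  define H where "H = (\<lambda>z. exp (p * Re (w z)))"
  have gw: "g = (\<lambda>z. exp (w z))" using assms(3) by (auto simp: w_def)
  have gH: "cmod (g z) powr p = H z" for z
    by (simp add: gw H_def norm_exp_eq_Re powr_def)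
  have Hm[measurable]: "H \<in> borel_measurable borel"
    unfolding H_def w_def by (intro borel_measurable_continuous_onI continuous_intros)
  have dm[measurable]: "gauss_density \<beta> \<in> borel_measurable borel"
    unfolding gauss_density_def by (intro borel_measurable_continuous_onI continuous_intros)
  have pt: "ennreal (gauss_density \<beta> (Complex x y)) * ennreal (H (Complex x y))
      = ennreal (\<beta> / pi) * ennreal (exp (-(Ac*x\<^sup>2 + 2*Bc*x*y + Cc*y\<^sup>2) + Dc*x + Ec*y))" for x y
  proof -
    have re: "Re (w (Complex x y)) = \<alpha> * (a1*x - a2*y) + \<alpha>/2 * (c1*(x\<^sup>2-y\<^sup>2) - 2*c2*x*y)"
    proof -
      have 1: "Re (a * Complex x y) = Re a*x - Im a*y" by simp
      have 2: "Re (c * (Complex x y)\<^sup>2) = Re c*(x\<^sup>2-y\<^sup>2) - 2*Im c*x*y"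
        by (simp add: power2_eq_square algebra_simps)
      show ?thesis unfolding w_def a1_def a2_def c1_def c2_def using 1 2 by (simp add: mult.assoc)
    qed
    have cm: "(cmod (Complex x y))\<^sup>2 = x\<^sup>2 + y\<^sup>2" by (simp add: cmod_power2)
    have "- \<beta> * (cmod (Complex x y))\<^sup>2 + p * Re (w (Complex x y)) = -(Ac*x\<^sup>2 + 2*Bc*x*y + Cc*y\<^sup>2) + Dc*x + Ec*y"
      unfolding re cm by (simp add: Ac_def Bc_def Cc_def Dc_def Ec_def \<beta>_def algebra_simps power2_eq_square) (simp add: field_simps)
    hence e: "gauss_density \<beta> (Complex x y) * H (Complex x y) = (\<beta> / pi) * exp (-(Ac*x\<^sup>2 + 2*Bc*x*y + Cc*y\<^sup>2) + Dc*x + Ec*y)"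
      unfolding gauss_density_def H_def by (simp add: exp_add[symmetric])
    have "ennreal (gauss_density \<beta> (Complex x y)) * ennreal (H (Complex x y)) = ennreal (gauss_density \<beta> (Complex x y) * H (Complex x y))"
      by (rule ennreal_mult[symmetric]) (use \<beta> in \<open>auto simp: gauss_density_def H_def\<close>)
    also have "\<dots> = ennreal ((\<beta> / pi) * exp (-(Ac*x\<^sup>2 + 2*Bc*x*y + Cc*y\<^sup>2) + Dc*x + Ec*y))" by (simp only: e)
    also have "\<dots> = ennreal (\<beta> / pi) * ennreal (exp (-(Ac*x\<^sup>2 + 2*Bc*x*y + Cc*y\<^sup>2) + Dc*x + Ec*y))"
      by (rule ennreal_mult) (use \<beta> in auto)
    finally show ?thesis .
  qed
  define N where "N = (\<integral>\<^sup>+ z. ennreal (cmod (g z) powr p) \<partial>gauss_measure \<beta>)"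
  have "N = (\<integral>\<^sup>+ z. ennreal (gauss_density \<beta> z) * ennreal (H z) \<partial>lborel)"
    unfolding N_def gauss_measure_def gH by (subst nn_integral_density) auto
  also have "\<dots> = (\<integral>\<^sup>+x. \<integral>\<^sup>+y. ennreal (gauss_density \<beta> (Complex x y)) * ennreal (H (Complex x y)) \<partial>lborel \<partial>lborel)"
    by (rule nn_integral_complex) measurable
  also have "\<dots> = (\<integral>\<^sup>+x. ennreal (\<beta> / pi) * (\<integral>\<^sup>+y. ennreal (exp (-(Ac*x\<^sup>2 + 2*Bc*x*y + Cc*y\<^sup>2) + Dc*x + Ec*y)) \<partial>lborel) \<partial>lborel)"
    unfolding pt by (intro nn_integral_cong nn_integral_cmult) measurable
  also have "\<dots> = ennreal (\<beta> / pi) * (\<integral>\<^sup>+x. \<integral>\<^sup>+y. ennreal (exp (-(Ac*x\<^sup>2 + 2*Bc*x*y + Cc*y\<^sup>2) + Dc*x + Ec*y)) \<partial>lborel \<partial>lborel)"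
    by (rule nn_integral_cmult) measurable
  also have "\<dots> = ennreal (\<beta> / pi) * (if Cc > 0 \<and> Ac*Cc - Bc\<^sup>2 > 0 then ennreal (pi / sqrt (Ac*Cc-Bc\<^sup>2) * exp (gK Ac Bc Cc Dc Ec)) else \<infinity>)"
    by (simp only: gauss2)
  finally have NN: "N = \<dots>" .
  have cc: "(cmod c)\<^sup>2 = c1\<^sup>2 + c2\<^sup>2" by (simp add: cmod_power2 c1_def c2_def)
  have det: "Ac*Cc - Bc\<^sup>2 = \<beta>\<^sup>2 * (1 - (cmod c)\<^sup>2)"
    unfolding cc by (simp add: Ac_def Bc_def Cc_def algebra_simps power2_eq_square)
  have cond: "(Cc > 0 \<and> Ac*Cc - Bc\<^sup>2 > 0) \<longleftrightarrow> cmod c < 1"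
  proof
    assume h: "Cc > 0 \<and> Ac*Cc - Bc\<^sup>2 > 0"
    hence "(cmod c)\<^sup>2 < 1" using \<beta> unfolding det by (simp add: zero_less_mult_iff)
    thus "cmod c < 1" by (simp add: power_less_one_iff abs_square_less_1)
  next
    assume h: "cmod c < 1"
    have "\<bar>c1\<bar> \<le> cmod c" unfolding c1_def by (rule abs_Re_le_cmod)
    hence "Cc > 0" using h \<beta> by (simp add: Cc_def)
    moreover have "(cmod c)\<^sup>2 < 1" using h by (simp add: power_less_one_iff)
    ultimately show "Cc > 0 \<and> Ac*Cc - Bc\<^sup>2 > 0" using \<beta> unfolding det by simp
  qed
  have hol: "g holomorphic_on UNIV" unfolding gw w_def by (intro holomorphic_intros)
  have p1: "g \<in> fock_space p \<alpha> \<longleftrightarrow> cmod c < 1"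
  proof -
    have "g \<in> fock_space p \<alpha> \<longleftrightarrow> N < \<infinity>"
      using hol by (simp add: fock_space_def N_def \<beta>_def)
    also have "\<dots> \<longleftrightarrow> cmod c < 1"
      unfolding NN cond[symmetric] using \<beta> by (auto simp: ennreal_mult_less_top)
    finally show ?thesis .
  qed
  have p2: "fock_norm p \<alpha> g = 1 / (1 - (cmod c)\<^sup>2) powr (1 / (2 * p)) *
        exp ((\<alpha> / 2) * (((cmod a)\<^sup>2 + Re (cnj c * a\<^sup>2)) / (1 - (cmod c)\<^sup>2)))" if hc: "cmod c < 1"
  proof -
    define s where "s = 1 - (cmod c)\<^sup>2"
    have s: "s > 0" using hc by (simp add: s_def power_less_one_iff)
    define Q where "Q = (cmod a)\<^sup>2 + Re (cnj c * a\<^sup>2)"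
    have gK: "gK Ac Bc Cc Dc Ec = \<beta> * Q / s"
    proof -
      have ca: "(cmod a)\<^sup>2 = a1\<^sup>2 + a2\<^sup>2" by (simp add: cmod_power2 a1_def a2_def)
      have Qe: "Q = (1-c1)*a2\<^sup>2 + (1+c1)*a1\<^sup>2 + 2*c2*a1*a2"
        unfolding Q_def ca by (simp add: a1_def a2_def c1_def c2_def power2_eq_square algebra_simps)
      show ?thesis unfolding gK_def det s_def[symmetric] Qe using \<beta> s
        by (simp add: Ac_def Bc_def Cc_def Dc_def Ec_def field_simps power2_eq_square)
    qed
    have Nv: "N = ennreal (1 / sqrt s * exp (\<beta> * Q / s))"
    proof -
      have "N = ennreal (\<beta> / pi) * ennreal (pi / sqrt (\<beta>\<^sup>2 * s) * exp (\<beta> * Q / s))"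
        unfolding NN using cond hc by (simp add: gK det s_def)
      also have "\<dots> = ennreal (\<beta> / pi * (pi / sqrt (\<beta>\<^sup>2 * s) * exp (\<beta> * Q / s)))"
        using \<beta> s by (simp add: ennreal_mult[symmetric])
      also have "\<beta> / pi * (pi / sqrt (\<beta>\<^sup>2 * s) * exp (\<beta> * Q / s)) = 1 / sqrt s * exp (\<beta> * Q / s)"
        using \<beta> s by (simp add: real_sqrt_mult)
      finally show ?thesis .
    qed
    have int: "(\<integral> z. cmod (g z) powr p \<partial>gauss_measure \<beta>) = enn2real N"
      unfolding N_def gH
    proof (rule integral_eq_nn_integral)
      show "H \<in> borel_measurable (gauss_measure \<beta>)" using Hm by (simp add: gauss_measure_def)
      show "AE z in gauss_measure \<beta>. 0 \<le> H z" by (simp add: H_def)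
    qed
    have "fock_norm p \<alpha> g = (1 / sqrt s * exp (\<beta> * Q / s)) powr (1 / p)"
      unfolding fock_norm_def \<beta>_def[symmetric] int Nv using s by simp
    also have "\<dots> = (1 / sqrt s) powr (1/p) * exp (\<beta> * Q / s) powr (1/p)"
      by (rule powr_mult)
    also have "(1 / sqrt s) powr (1/p) = 1 / s powr (1 / (2 * p))"
    proof -
      have "sqrt s = s powr (1/2)" using s by (simp add: powr_half_sqrt)
      hence "sqrt s powr (1/p) = s powr (1 / (2 * p))" using s by (simp add: powr_powr)
      thus ?thesis using s by (simp add: powr_divide)
    qed
    also have "exp (\<beta> * Q / s) powr (1/p) = exp ((\<alpha> / 2) * (Q / s))"
      using ap by (simp add: powr_def \<beta>_def)
    finally show ?thesis by (simp add: s_def Q_def)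
  qed
  show ?thesis using p1 p2 by blast
qed

end
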